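(* Let $y\in\mathbb R^n$, let $X\in\mathbb R^{n\times p}$ have nonzero columns $x_1,\dots,x_p$, and let $\sigma^2>0$ be fixed. Then the maximization problem $\operatorname{Argmax}_{\gamma\in[0,\infty)^p}\ell(\sigma^2,\gamma)$ has at least one solution $\hat\gamma=(\hat\gamma_1,\ldots,\hat\gamma_p)$, and it can be chosen with the following property: for every $j\in\{1,\dots,p\}$, \[ \hat\gamma_{j}=\begin{cases}\dfrac{\left(x_j'C_j^{-1}y\right)^2-x_j'C_j^{-1}x_j}{\left(x_j'C_j^{-1}x_j\right)^2} & \text{if } \left(x_j'C_j^{-1}y\right)^2> x_j'C_j^{-1}x_j,\\[2mm] 0 &\text{otherwise},\end{cases} \] where \[C_j= \sigma^2 I_n +\sum_{k\in I_{\hat\gamma}\setminus\{j\}}\hat\gamma_{k}x_kx_k',\qquad I_{\hat\gamma}=\{k:\hat\gamma_k\neq 0\}.\]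
   Context: No probabilistic assumptions are made here: $y$ and $X$ are fixed. For $\gamma\in\Theta=[0,\infty)^p$ let $I_\gamma=\{1\le j\le p:\gamma_j\neq 0\}$ and $C_\gamma=\sigma^2 I_n+\sum_{j\in I_\gamma}\gamma_j x_jx_j'$, where $I_n$ is the $n\times n$ identity. The (marginal, type-II) log-likelihood is $\ell(\sigma^2,\gamma)=-\tfrac12\log\det(C_\gamma)-\tfrac12\operatorname{Tr}(C_\gamma^{-1}yy')$. It is the log-likelihood of $y\sim N(0,C_\gamma)$, arising from the model $y\sim N(X\beta,\sigma^2 I_n)$ with independent priors $\beta_j\sim N(0,\gamma_j)$, where $N(0,0)$ denotes the point mass at $0$. *)

theory Defs
  imports "HOL-Analysis.Analysis"
begin

definition outer :: "real^'n \<Rightarrow> real^'n \<Rightarrow> real^'n^'n" where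
  "outer u v = (\<chi> i k. u $ i * v $ k)"

definition supp_idx :: "('p::finite \<Rightarrow> real) \<Rightarrow> 'p set" where
  "supp_idx g = {j. g j \<noteq> 0}"

definition Cmat :: "real \<Rightarrow> ('p::finite \<Rightarrow> real^'n) \<Rightarrow> ('p \<Rightarrow> real) \<Rightarrow> real^'n^'n" where
  "Cmat s2 x g = s2 *\<^sub>R mat 1 + (\<Sum>j\<in>supp_idx g. g j *\<^sub>R outer (x j) (x j))"

definition loglik :: "real^'n \<Rightarrow> ('p::finite \<Rightarrow> real^'n) \<Rightarrow> real \<Rightarrow> ('p \<Rightarrow> real) \<Rightarrow> real" where
  "loglik y x s2 g =
     - (1/2) * ln (det (Cmat s2 x g))
     - (1/2) * trace (matrix_inv (Cmat s2 x g) ** outer y y)"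

end

theory Submission
  imports Defs
begin


lemma outer_mv: "outer a b *v u = (b \<bullet> u) *\<^sub>R (a::real^'n)"
  by (simp add: vec_eq_iff matrix_vector_mult_def outer_def inner_vec_def sum_distrib_left mult.commute mult.left_commute)

lemma transpose_outer: "transpose (outer a a) = outer a (a::real^'n)"
  by (simp add: vec_eq_iff transpose_def outer_def mult.commute)

lemma mat_outer: "M ** outer a b = outer (M *v a) (b::real^'n)"
  by (simp add: vec_eq_iff matrix_matrix_mult_def matrix_vector_mult_def outer_def sum_distrib_right mult.assoc)

lemma outer_scale: "outer (t *\<^sub>R a) b = t *\<^sub>R outer a (b::real^'n)"
  by (simp add: vec_eq_iff outer_def)

lemma trace_outer: "trace (A ** outer y y) = y \<bullet> (A *v (y::real^'n))"
  by (simp add: trace_def matrix_matrix_mult_def outer_def inner_vec_def matrix_vector_mult_def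
      sum_distrib_left mult.commute mult.left_commute)

lemma transpose_add2: "transpose (A + B) = transpose A + transpose (B::'a::semiring_1^'n^'m)"
  by (simp add: transpose_def vec_eq_iff)

definition pdm :: "real^'n^'n \<Rightarrow> bool" where
  "pdm M \<longleftrightarrow> transpose M = M \<and> (\<forall>u. u \<noteq> 0 \<longrightarrow> u \<bullet> (M *v u) > 0)"

lemma pdm_add:
  assumes "pdm M" "t \<ge> 0" shows "pdm (M + t *\<^sub>R outer a a)"
proof -
  have "u \<bullet> ((M + t *\<^sub>R outer a a) *v u) = u \<bullet> (M *v u) + t * (a \<bullet> u)^2" for u
    by (simp add: matrix_vector_mult_add_rdistrib outer_mv inner_add_right power2_eq_square
         inner_commute scaleR_matrix_vector_assoc[symmetric])
  moreover have "transpose (M + t *\<^sub>R outer a a) = M + t *\<^sub>R outer a a"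
    using assms by (simp add: pdm_def transpose_add2 transpose_scalar transpose_outer)
  ultimately show ?thesis using assms unfolding pdm_def
    by (smt (verit) mult_nonneg_nonneg zero_le_power2)
qed

lemma pdm_s2: "s2 > 0 \<Longrightarrow> pdm (s2 *\<^sub>R mat 1 :: real^'n^'n)"
  by (simp add: pdm_def transpose_scalar scaleR_matrix_vector_assoc[symmetric])

lemma matrix_inv_props:
  assumes "invertible (M::real^'n^'n)"
  shows "M ** matrix_inv M = mat 1" "matrix_inv M ** M = mat 1" "M *v (matrix_inv M *v y) = y"
    "matrix_inv M *v (M *v y) = y"
proof -
  have "M ** matrix_inv M = mat 1 \<and> matrix_inv M ** M = mat 1"
    using assms unfolding invertible_def matrix_inv_def by (rule someI_ex)
  then show "M ** matrix_inv M = mat 1" "matrix_inv M ** M = mat 1"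
    "M *v (matrix_inv M *v y) = y" "matrix_inv M *v (M *v y) = y"
    by (auto simp: matrix_vector_mul_assoc)
qed

lemma pdm_invertible: assumes "pdm M" shows "invertible M"
proof -
  have "\<forall>x. M *v x = 0 \<longrightarrow> x = 0"
    using assms unfolding pdm_def by (metis inner_zero_right less_irrefl)
  then show ?thesis
    using matrix_left_invertible_ker invertible_left_inverse by blast
qed

lemma sym_dot: assumes "transpose M = M" shows "(M *v q) \<bullet> p = q \<bullet> (M *v (p::real^'n))"
  by (metis assms dot_lmul_matrix vector_transpose_matrix)

lemma sym_inv_dot:
  assumes "pdm M" shows "y \<bullet> (matrix_inv M *v x) = x \<bullet> (matrix_inv M *v y)"
proof -
  have inv: "invertible M" using assms pdm_invertible by blast
  have T: "transpose M = M" using assms pdm_def by blast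
  have "y \<bullet> (matrix_inv M *v x) = (M *v (matrix_inv M *v y)) \<bullet> (matrix_inv M *v x)"
    using matrix_inv_props(3)[OF inv] by simp
  also have "\<dots> = (matrix_inv M *v y) \<bullet> x"
    by (subst sym_dot[OF T]) (simp add: matrix_inv_props(3)[OF inv])
  finally show ?thesis by (simp add: inner_commute)
qed

lemma pdm_quad_inv:
  assumes "pdm M" shows "x \<noteq> 0 \<Longrightarrow> x \<bullet> (matrix_inv M *v x) > 0" "y \<bullet> (matrix_inv M *v y) \<ge> 0"
proof -
  have inv: "invertible M" using assms pdm_invertible by blast
  have T: "transpose M = M" using assms pdm_def by blast
  have key: "z \<bullet> (matrix_inv M *v z) = (matrix_inv M *v z) \<bullet> (M *v (matrix_inv M *v z))" for z
    using matrix_inv_props(3)[OF inv, of z] by (simp add: inner_commute)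
  show "x \<noteq> 0 \<Longrightarrow> x \<bullet> (matrix_inv M *v x) > 0"
  proof -
    assume "x \<noteq> 0"
    then have "matrix_inv M *v x \<noteq> 0" using matrix_inv_props(3)[OF inv, of x] by auto
    then show ?thesis using key assms pdm_def by metis
  qed
  show "y \<bullet> (matrix_inv M *v y) \<ge> 0"
    using key[of y] assms unfolding pdm_def
    by (metis inner_zero_left order_less_imp_le order_refl)
qed

lemma rows_id: "(\<chi> i. row i A) = (A::'a^'n^'m)"
  by (simp add: vec_eq_iff row_def)

lemma det_rows_add_multiple:
  fixes R :: "real^'n^'n"
  assumes "finite S" "k \<notin> S"
  shows "det (\<chi> i. if i \<in> S then row i R + c i *s row k R else row i R) = det R"
  using assms
proof (induction S rule: finite_induct)
  case empty then show ?case by (simp add: rows_id)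
next
  case (insert i S)
  let ?M = "(\<chi> l. if l \<in> S then row l R + c l *s row k R else row l R) :: real^'n^'n"
  have ik: "i \<noteq> k" using insert by auto
  have "(\<chi> l. if l \<in> insert i S then row l R + c l *s row k R else row l R)
      = (\<chi> l. if l = i then row i ?M + c i *s row k ?M else row l ?M)"
    using insert ik by (auto simp: vec_eq_iff row_def)
  then show ?case using det_row_operation[OF ik, of ?M "c i"] insert by simp
qed

lemma det_rank1_rows:
  fixes A :: "real^'n^'n"
  assumes "finite S"
  shows "det (\<chi> i. if i \<in> S then row i A + u$i *s w else row i A)
       = det A + (\<Sum>i\<in>S. u$i * det (\<chi> l. if l = i then w else row l A))"
  using assms
proof (induction S rule: finite_induct)
  case empty show ?case by (simp add: rows_id)
next
  case (insert k S)
  let ?Q = "(\<chi> i. if i \<in> S then row i A + u$i *s w else row i A) :: real^'n^'n"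
  have e1: "(\<chi> i. if i \<in> insert k S then row i A + u$i *s w else row i A)
     = (\<chi> i. if i = k then row k A + u$k *s w else row i ?Q)"
    using insert by (auto simp: vec_eq_iff row_def)
  have e2: "(\<chi> i. if i = k then row k A else row i ?Q) = ?Q"
    using insert by (auto simp: vec_eq_iff row_def)
  have e3: "det (\<chi> i. if i = k then w else row i ?Q) = det (\<chi> l. if l = k then w else row l A)"
  proof -
    let ?R = "(\<chi> l. if l = k then w else row l A) :: real^'n^'n"
    have "(\<chi> i. if i \<in> S then row i ?R + u$i *s row k ?R else row i ?R) = (\<chi> i. if i = k then w else row i ?Q)"
      using insert by (auto simp: vec_eq_iff row_def)
    then show ?thesis using det_rows_add_multiple[of S k ?R "\<lambda>i. u$i"] insert by simp
  qed
  have "det (\<chi> i. if i = k then row k A + u$k *s w else row i ?Q)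
      = det (\<chi> i. if i = k then row k A else row i ?Q) + det (\<chi> i. if i = k then u$k *s w else row i ?Q)"
    by (rule det_row_add[of k "\<lambda>_. row k A" "\<lambda>_. u$k *s w" "\<lambda>i. row i ?Q"])
  also have "det (\<chi> i. if i = k then u$k *s w else row i ?Q) = u$k * det (\<chi> i. if i = k then w else row i ?Q)"
    by (rule det_row_mul[of k "u$k" "\<lambda>_. w" "\<lambda>i. row i ?Q"])
  finally have "det (\<chi> i. if i = k then row k A + u$k *s w else row i ?Q)
    = det ?Q + u$k * det (\<chi> l. if l = k then w else row l A)" unfolding e2 e3 .
  then show ?case unfolding e1 insert.IH sum.insert[OF insert.hyps] by (simp add: algebra_simps)
qed

lemma det_id_row: "det (\<chi> l. if l = i then w else row l (mat 1 :: real^'n^'n)) = w$i"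
proof -
  have A: "transpose (\<chi> l. if l = i then w else row l (mat 1 :: real^'n^'n))
      = (\<chi> a b. if b = i then w$a else (mat 1 :: real^'n^'n)$a$b)"
    unfolding transpose_def row_def by (intro arg_cong[where f=vec_lambda] ext) (auto simp: mat_def)
  have B: "det (\<chi> a b. if b = i then w$a else (mat 1 :: real^'n^'n)$a$b) = w$i"
  proof -
    have X: "det (\<chi> ia j. if j = i then ((mat 1::real^'n^'n) *v w) $ ia else (mat 1::real^'n^'n) $ ia $ j) = w $ i * det (mat 1::real^'n^'n)" by (rule cramer_lemma)
    show ?thesis using X[unfolded matrix_vector_mul_lid] by simp
  qed
  have "det (\<chi> l. if l = i then w else row l (mat 1 :: real^'n^'n)) = det (transpose (\<chi> l. if l = i then w else row l (mat 1 :: real^'n^'n)))"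
    by (rule det_transpose[symmetric])
  also have "\<dots> = w$i" by (simp only: A B)
  finally show ?thesis .
qed

lemma det_I_outer: "det (mat 1 + outer u w) = 1 + u \<bullet> (w::real^'n)"
proof -
  have "mat 1 + outer u w = (\<chi> i. if i \<in> UNIV then row i (mat 1) + u$i *s w else row i (mat 1 :: real^'n^'n))"
    by (simp add: vec_eq_iff row_def outer_def mat_def)
  then show ?thesis using det_rank1_rows[of UNIV "mat 1 :: real^'n^'n" u w]
    by (simp add: det_id_row inner_vec_def)
qed

lemma det_rank1:
  assumes "invertible (M::real^'n^'n)"
  shows "det (M + t *\<^sub>R outer a a) = det M * (1 + t * (a \<bullet> (matrix_inv M *v a)))"
proof -
  let ?z = "t *\<^sub>R (matrix_inv M *v a)"
  have "M ** (mat 1 + outer ?z a) = M + outer (M *v ?z) a"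
    by (simp add: matrix_add_ldistrib mat_outer)
  also have "M *v ?z = t *\<^sub>R a"
    by (simp add: matrix_vector_mult_scaleR matrix_inv_props(3)[OF assms])
  finally have eq: "M + t *\<^sub>R outer a a = M ** (mat 1 + outer ?z a)"
    by (simp add: outer_scale)
  show ?thesis unfolding eq det_mul det_I_outer
    by (simp add: inner_commute)
qed

lemma sherman:
  assumes "pdm M" "t \<ge> 0"
  shows "y \<bullet> (matrix_inv (M + t *\<^sub>R outer a a) *v y) = y \<bullet> (matrix_inv M *v y)
     - t * (a \<bullet> (matrix_inv M *v y))^2 / (1 + t * (a \<bullet> (matrix_inv M *v a)))"
proof -
  let ?N = "M + t *\<^sub>R outer a a"
  have invN: "invertible ?N" using pdm_add pdm_invertible assms by blast
  have invM: "invertible M" using pdm_invertible assms by blast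
  define w where "w = matrix_inv ?N *v y"
  define b where "b = a \<bullet> (matrix_inv M *v a)"
  define c where "c = a \<bullet> (matrix_inv M *v y)"
  define q where "q = y \<bullet> (matrix_inv M *v y)"
  have b0: "b \<ge> 0" using pdm_quad_inv(2)[OF assms(1)] b_def by blast
  have "?N *v w = y" using matrix_inv_props(3)[OF invN] w_def by simp
  then have "M *v w + (t * (a \<bullet> w)) *\<^sub>R a = y"
    by (simp add: matrix_vector_mult_add_rdistrib scaleR_matrix_vector_assoc[symmetric] outer_mv)
  then have "matrix_inv M *v (M *v w + (t * (a \<bullet> w)) *\<^sub>R a) = matrix_inv M *v y" by simp
  then have e0: "w + (t * (a \<bullet> w)) *\<^sub>R (matrix_inv M *v a) = matrix_inv M *v y"
    by (simp add: matrix_vector_right_distrib matrix_vector_mult_scaleR matrix_inv_props(4)[OF invM])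
  then have "a \<bullet> (w + (t * (a \<bullet> w)) *\<^sub>R (matrix_inv M *v a)) = c" using c_def by simp
  then have e1: "(a \<bullet> w) * (1 + t * b) = c" by (simp add: inner_add_right b_def algebra_simps)
  have pos: "1 + t * b > 0" using b0 assms(2) by (smt (verit) mult_nonneg_nonneg)
  have aw: "a \<bullet> w = c / (1 + t * b)" using e1 pos by (simp add: field_simps)
  have "y \<bullet> (w + (t * (a \<bullet> w)) *\<^sub>R (matrix_inv M *v a)) = q" using e0 q_def by simp
  moreover have "y \<bullet> (matrix_inv M *v a) = c" using sym_inv_dot[OF assms(1)] c_def by simp
  ultimately have "y \<bullet> w = q - t * (a \<bullet> w) * c" by (simp add: inner_add_right algebra_simps)
  then have "y \<bullet> w = q - t * c^2 / (1 + t * b)" using aw by (simp add: power2_eq_square)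
  then show ?thesis using w_def q_def c_def b_def by simp
qed

lemma pdm_sum:
  fixes x :: "'p \<Rightarrow> real^'n"
  assumes "finite S" "pdm B" "det B > 0" "\<forall>k\<in>S. g k \<ge> 0"
  shows "pdm (B + (\<Sum>k\<in>S. g k *\<^sub>R outer (x k) (x k)))
       \<and> det (B + (\<Sum>k\<in>S. g k *\<^sub>R outer (x k) (x k))) \<ge> det B"
  using assms
proof (induction S rule: finite_induct)
  case empty then show ?case by simp
next
  case (insert k S)
  let ?P = "B + (\<Sum>k\<in>S. g k *\<^sub>R outer (x k) (x k))"
  have IH: "pdm ?P" "det ?P \<ge> det B" using insert by auto
  have gk: "g k \<ge> 0" using insert by auto
  have eq: "B + (\<Sum>k\<in>insert k S. g k *\<^sub>R outer (x k) (x k)) = ?P + g k *\<^sub>R outer (x k) (x k)"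
    using insert by (simp add: add_ac)
  have b0: "x k \<bullet> (matrix_inv ?P *v x k) \<ge> 0" using pdm_quad_inv(2)[OF IH(1)] by blast
  have d: "det (?P + g k *\<^sub>R outer (x k) (x k)) = det ?P * (1 + g k * (x k \<bullet> (matrix_inv ?P *v x k)))"
    using det_rank1 pdm_invertible IH(1) by blast
  have "det ?P * (1 + g k * (x k \<bullet> (matrix_inv ?P *v x k))) \<ge> det ?P * 1"
    using IH(2) insert.prems gk b0 by (intro mult_left_mono) auto
  then show ?case unfolding eq d using pdm_add[OF IH(1) gk] IH(2) by simp
qed

lemma ln_lt: "(z::real) > 0 \<Longrightarrow> z \<noteq> 1 \<Longrightarrow> ln z < z - 1"
  using ln_le_minus_one ln_eq_minus_one by force

lemma phi_unique:
  fixes a b t :: real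
  assumes b: "b > 0" and t: "t \<ge> 0"
    and ne: "t \<noteq> (if a^2 > b then (a^2 - b)/b^2 else 0)"
  shows "- ln (1 + t*b) + t * a^2/(1+t*b)
       < - ln (1 + (if a^2 > b then (a^2 - b)/b^2 else 0)*b)
         + (if a^2 > b then (a^2 - b)/b^2 else 0) * a^2/(1+(if a^2 > b then (a^2 - b)/b^2 else 0)*b)"
proof -
  define c where "c = a^2/b"
  define s where "s = 1 + t*b"
  have s1: "s \<ge> 1" using b t s_def by simp
  have phi: "t * a^2/(1+t*b) = c - c/s"
  proof -
    have "s > 0" using s1 by simp
    then have "c - c/s = c * (s - 1) / s" by (simp add: field_simps)
    also have "\<dots> = t * a^2 / (1 + t*b)" using b unfolding c_def s_def by simp
    finally show ?thesis by simp
  qed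
  show ?thesis
  proof (cases "a^2 > b")
    case True
    have c1: "c > 1" using True b c_def by simp
    have ts: "1 + ((a^2 - b)/b^2) * b = c" using b unfolding c_def by (simp add: field_simps power2_eq_square)
    have a2: "a^2 \<noteq> 0" using True b by auto
    have r: "((a^2 - b)/b^2) * a^2 / c = c - 1" using b a2 unfolding c_def by (simp add: field_simps power2_eq_square)
    have "s \<noteq> c"
    proof
      assume "s = c"
      then have "t = (a^2 - b)/b^2" using b unfolding s_def c_def by (simp add: field_simps power2_eq_square)
      then show False using ne True by simp
    qed
    then have "ln (c/s) < c/s - 1" using ln_lt s1 c1 by simp
    moreover have "ln (c/s) = ln c - ln s" using s1 c1 by (simp add: ln_div)
    ultimately show ?thesis using True phi ts r unfolding s_def[symmetric]
      by (simp add: field_simps)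
  next
    case False
    have c1: "c \<le> 1" using False b c_def by simp
    have "t \<noteq> 0" using ne False by simp
    then have s1': "s > 1" using t b s_def by simp
    have "ln (1/s) < 1/s - 1" using ln_lt s1' by simp
    moreover have "ln (1/s) = - ln s" using s1' by (simp add: ln_div)
    moreover have "c - c/s \<le> 1 - 1/s"
    proof -
      have "c - c/s = c * (1 - 1/s)" by (simp add: algebra_simps)
      also have "\<dots> \<le> 1 * (1 - 1/s)" using c1 s1' by (intro mult_right_mono) auto
      finally show ?thesis by simp
    qed
    ultimately show ?thesis using False phi unfolding s_def[symmetric] by simp
  qed
qed
lemma det_scal: "det (s2 *\<^sub>R mat 1 :: real^'n^'n) = s2 ^ CARD('n)"
proof -
  have "det (s2 *\<^sub>R mat 1 :: real^'n^'n) = (\<Prod>i\<in>UNIV. (s2 *\<^sub>R mat 1 :: real^'n^'n)$i$i)"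
    by (rule det_diagonal) (simp add: mat_def)
  then show ?thesis by (simp add: mat_def)
qed

lemma continuous_on_det: "continuous_on S f \<Longrightarrow> continuous_on S (\<lambda>v. det (f v :: real^'n^'n))"
  unfolding det_def by (intro continuous_intros)

lemma Cmat_UNIV: "Cmat s2 x g = s2 *\<^sub>R mat 1 + (\<Sum>k\<in>UNIV. g k *\<^sub>R outer (x k) (x k))"
proof -
  have "(\<Sum>k\<in>supp_idx g. g k *\<^sub>R outer (x k) (x k)) = (\<Sum>k\<in>UNIV. g k *\<^sub>R outer (x k) (x k))"
    by (rule sum.mono_neutral_left) (auto simp: supp_idx_def)
  then show ?thesis unfolding Cmat_def by simp
qed

lemma supp_sum_minus: "(\<Sum>k\<in>supp_idx g - {j}. g k *\<^sub>R outer (x k) (x k)) = (\<Sum>k\<in>UNIV - {j}. g k *\<^sub>R outer (x k) (x k :: real^'n))"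
  by (rule sum.mono_neutral_left) (auto simp: supp_idx_def)

lemma Cprops:
  fixes x :: "'p::finite \<Rightarrow> real^'n"
  assumes "s2 > 0" "\<forall>j. g j \<ge> 0"
  shows "pdm (Cmat s2 x g)" "det (Cmat s2 x g) \<ge> det (s2 *\<^sub>R mat 1 :: real^'n^'n)"
    "det (s2 *\<^sub>R mat 1 :: real^'n^'n) > 0"
proof -
  have d: "det (s2 *\<^sub>R mat 1 :: real^'n^'n) > 0" using assms by (simp add: det_scal)
  show "det (s2 *\<^sub>R mat 1 :: real^'n^'n) > 0" by (rule d)
  have "pdm (s2 *\<^sub>R mat 1 :: real^'n^'n)" using pdm_s2 assms by blast
  from pdm_sum[OF _ this d, of UNIV g x] assms
  show "pdm (Cmat s2 x g)" "det (Cmat s2 x g) \<ge> det (s2 *\<^sub>R mat 1 :: real^'n^'n)"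
    unfolding Cmat_UNIV by auto
qed

lemma Lform:
  "loglik y x s2 g = -(1/2) * ln (det (Cmat s2 x g)) - (1/2) * (y \<bullet> (matrix_inv (Cmat s2 x g) *v y))"
  unfolding loglik_def trace_outer by simp

lemma coerc:
  fixes x :: "'p::finite \<Rightarrow> real^'n" and y :: "real^'n"
  assumes s2: "s2 > 0" and xnz: "\<And>j. x j \<noteq> 0"
  defines "B \<equiv> (s2 *\<^sub>R mat 1 :: real^'n^'n)"
  defines "R \<equiv> (\<Sum>j\<in>UNIV. exp (y \<bullet> (matrix_inv B *v y)) / (x j \<bullet> (matrix_inv B *v x j)))"
  assumes h: "\<forall>k. h k \<ge> 0" and hj: "h j > R"
  shows "loglik y x s2 h < loglik y x s2 (\<lambda>_. 0)"
proof -
  define q0 where "q0 = y \<bullet> (matrix_inv B *v y)"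
  define b0 where "b0 j = x j \<bullet> (matrix_inv B *v x j)" for j
  have pdmB: "pdm B" using pdm_s2 s2 B_def by blast
  have detB: "det B > 0" using s2 B_def by (simp add: det_scal)
  have b0pos: "b0 k > 0" for k unfolding b0_def by (rule pdm_quad_inv(1)[OF pdmB xnz])
  have C0: "Cmat s2 x (\<lambda>_. 0) = B" unfolding Cmat_UNIV B_def by simp
  have L0: "loglik y x s2 (\<lambda>_. 0) = -(1/2) * ln (det B) - (1/2) * q0"
    unfolding Lform C0 q0_def ..
  let ?B1 = "B + h j *\<^sub>R outer (x j) (x j)"
  have pdmB1: "pdm ?B1" using pdm_add[OF pdmB] h by blast
  have dB1: "det ?B1 = det B * (1 + h j * b0 j)"
    unfolding b0_def by (rule det_rank1[OF pdm_invertible[OF pdmB]])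
  have hb0: "h j * b0 j \<ge> 0" using h b0pos by (simp add: less_imp_le)
  have dB1pos: "det ?B1 > 0" using dB1 detB hb0 by simp
  have Ceq: "Cmat s2 x h = ?B1 + (\<Sum>k\<in>UNIV - {j}. h k *\<^sub>R outer (x k) (x k))"
  proof -
    have "(\<Sum>k\<in>UNIV. h k *\<^sub>R outer (x k) (x k)) = h j *\<^sub>R outer (x j) (x j) + (\<Sum>k\<in>UNIV - {j}. h k *\<^sub>R outer (x k) (x k))"
      by (rule sum.remove) simp_all
    then show ?thesis unfolding Cmat_UNIV B_def by (simp only: add.assoc)
  qed
  have dC: "det (Cmat s2 x h) \<ge> det ?B1"
    using pdm_sum[OF _ pdmB1 dB1pos, of "UNIV - {j}" h x] h unfolding Ceq by auto
  have "exp q0 / b0 j \<le> R" unfolding R_def q0_def b0_def[symmetric]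
    by (rule member_le_sum) (auto intro: divide_nonneg_pos b0pos less_imp_le)
  then have "exp q0 / b0 j < h j" using hj by simp
  then have "exp q0 < h j * b0 j" using b0pos[of j] by (simp add: field_simps)
  then have "exp q0 < 1 + h j * b0 j" by simp
  then have lq: "q0 < ln (1 + h j * b0 j)"
    using ln_less_cancel_iff[of "exp q0" "1 + h j * b0 j"] hb0 by simp
  have "ln (det ?B1) = ln (det B) + ln (1 + h j * b0 j)"
    using dB1 detB hb0 by (simp add: ln_mult)
  moreover have "ln (det ?B1) \<le> ln (det (Cmat s2 x h))" using dC dB1pos by simp
  moreover have "y \<bullet> (matrix_inv (Cmat s2 x h) *v y) \<ge> 0"
    by (rule pdm_quad_inv(2)[OF Cprops(1)[OF s2 h]])
  ultimately show ?thesis using lq L0 Lform[of y x s2 h] by linarith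
qed

lemma cont_if_const: "continuous_on S f \<Longrightarrow> continuous_on S g \<Longrightarrow> continuous_on S (\<lambda>v. if P then f v else g v)"
  by (cases P) auto

lemma contF:
  fixes x :: "'p::finite \<Rightarrow> real^'n" and y :: "real^'n"
  assumes s2: "s2 > 0"
  shows "continuous_on {v::real^'p. \<forall>j. v$j \<ge> 0} (\<lambda>v. loglik y x s2 (\<lambda>j. v$j))"
proof -
  let ?S = "{v::real^'p. \<forall>j. v$j \<ge> 0}"
  define M where "M v = s2 *\<^sub>R mat 1 + (\<Sum>k\<in>UNIV. (v$k) *\<^sub>R outer (x k) (x k))" for v :: "real^'p"
  have MC: "Cmat s2 x (\<lambda>j. v$j) = M v" for v unfolding Cmat_UNIV M_def ..
  have dpos: "det (M v) > 0" if "v \<in> ?S" for v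
  proof -
    have "\<forall>j. v$j \<ge> 0" using that by simp
    moreover have "det (s2 *\<^sub>R mat 1 :: real^'n^'n) > 0" using s2 by (simp add: det_scal)
    ultimately show ?thesis using Cprops(2)[OF s2, of "\<lambda>j. v$j" x]
      unfolding MC by (metis order_less_le_trans)
  qed
  have contM: "continuous_on ?S M" unfolding M_def by (intro continuous_intros)
  define G where "G v = -(1/2) * ln (det (M v)) - (1/2) * (y \<bullet> (\<chi> k. det (\<chi> i l. if l = k then y$i else M v $i$l) / det (M v)))" for v
  have eq: "loglik y x s2 (\<lambda>j. v$j) = G v" if v: "v \<in> ?S" for v
  proof -
    have v0: "\<forall>j. v$j \<ge> 0" using v by simp
    have "pdm (M v)" using Cprops(1)[OF s2 v0, of x] unfolding MC .
    then have inv: "invertible (M v)" by (rule pdm_invertible)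
    have "M v *v (matrix_inv (M v) *v y) = y" by (rule matrix_inv_props(3)[OF inv])
    then have "matrix_inv (M v) *v y = (\<chi> k. det (\<chi> i l. if l = k then y$i else M v $i$l) / det (M v))"
      using cramer[of "M v" "matrix_inv (M v) *v y" y] dpos[OF v] by linarith
    then show ?thesis unfolding G_def Lform MC by (simp only:)
  qed
  have c0: "continuous_on ?S (\<lambda>v. det (M v))" by (rule continuous_on_det[OF contM])
  have ck: "continuous_on ?S (\<lambda>v. det (\<chi> i l. if l = k then y$i else M v $i$l))" for k
    by (rule continuous_on_det)
      (intro continuous_on_vec_lambda cont_if_const continuous_on_const continuous_on_component contM)
  have nz: "\<forall>v\<in>?S. det (M v) \<noteq> 0" using dpos by (metis less_irrefl)
  have "continuous_on ?S G" unfolding G_def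
    by (intro continuous_on_diff continuous_on_mult continuous_on_const continuous_on_ln c0
        continuous_on_inner continuous_on_vec_lambda continuous_on_divide ck nz)
  then show ?thesis using eq continuous_on_cong[of ?S ?S "\<lambda>v. loglik y x s2 (\<lambda>j. v$j)" G] by blast
qed

lemma coord:
  fixes x :: "'p::finite \<Rightarrow> real^'n" and y :: "real^'n" and j :: 'p
  assumes s2: "s2 > 0" and xnz: "\<And>j. x j \<noteq> 0"
    and g0: "\<forall>j. g j \<ge> 0"
    and gmax: "\<forall>h::'p \<Rightarrow> real. (\<forall>j. h j \<ge> 0) \<longrightarrow> loglik y x s2 h \<le> loglik y x s2 g"
  defines "Cj \<equiv> s2 *\<^sub>R mat 1 + (\<Sum>k\<in>supp_idx g - {j}. g k *\<^sub>R outer (x k) (x k))"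
  defines "a \<equiv> x j \<bullet> (matrix_inv Cj *v y)"
  defines "b \<equiv> x j \<bullet> (matrix_inv Cj *v x j)"
  shows "g j = (if a\<^sup>2 > b then (a\<^sup>2 - b) / b\<^sup>2 else 0)"
proof (rule ccontr)
  assume ne: "g j \<noteq> (if a\<^sup>2 > b then (a\<^sup>2 - b) / b\<^sup>2 else 0)"
  define ts where "ts = (if a\<^sup>2 > b then (a\<^sup>2 - b) / b\<^sup>2 else 0)"
  define q where "q = y \<bullet> (matrix_inv Cj *v y)"
  define B where "B = (s2 *\<^sub>R mat 1 :: real^'n^'n)"
  have pdmB: "pdm B" using pdm_s2 s2 B_def by blast
  have detB: "det B > 0" using s2 B_def by (simp add: det_scal)
  have CjU: "Cj = B + (\<Sum>k\<in>UNIV - {j}. g k *\<^sub>R outer (x k) (x k))"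
    unfolding Cj_def B_def supp_sum_minus ..
  have Cjp: "pdm Cj" "det Cj \<ge> det B"
    using pdm_sum[OF _ pdmB detB, of "UNIV - {j}" g x] g0 unfolding CjU by auto
  have dCj: "det Cj > 0" using Cjp detB by linarith
  have bpos: "b > 0" unfolding b_def by (rule pdm_quad_inv(1)[OF Cjp(1) xnz])
  have Ct: "Cmat s2 x (g(j := t)) = Cj + t *\<^sub>R outer (x j) (x j)" for t
  proof -
    have "(\<Sum>k\<in>UNIV. (g(j := t)) k *\<^sub>R outer (x k) (x k)) = (g(j := t)) j *\<^sub>R outer (x j) (x j) + (\<Sum>k\<in>UNIV - {j}. (g(j := t)) k *\<^sub>R outer (x k) (x k))"
      by (rule sum.remove) simp_all
    also have "(\<Sum>k\<in>UNIV - {j}. (g(j := t)) k *\<^sub>R outer (x k) (x k)) = (\<Sum>k\<in>UNIV - {j}. g k *\<^sub>R outer (x k) (x k))"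
      by (rule sum.cong) auto
    finally show ?thesis unfolding Cmat_UNIV CjU B_def by (simp add: add_ac)
  qed
  have Lt: "loglik y x s2 (g(j := t)) = -(1/2) * ln (det Cj) - (1/2) * q
      + (1/2) * (- ln (1 + t*b) + t * a^2/(1+t*b))" if t: "t \<ge> 0" for t
  proof -
    have d: "det (Cj + t *\<^sub>R outer (x j) (x j)) = det Cj * (1 + t * b)"
      unfolding b_def by (rule det_rank1[OF pdm_invertible[OF Cjp(1)]])
    have tb: "1 + t * b > 0" using t bpos by (smt (verit) mult_nonneg_nonneg)
    have ln: "ln (det Cj * (1 + t * b)) = ln (det Cj) + ln (1 + t*b)"
      using dCj tb by (simp add: ln_mult)
    have sh: "y \<bullet> (matrix_inv (Cj + t *\<^sub>R outer (x j) (x j)) *v y) = q - t * a^2 / (1 + t * b)"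
      unfolding q_def a_def b_def by (rule sherman[OF Cjp(1) t])
    show ?thesis unfolding Lform Ct d ln sh by (simp add: algebra_simps)
  qed
  have ts0: "ts \<ge> 0" unfolding ts_def using bpos by auto
  have "- ln (1 + g j*b) + g j * a^2/(1+g j*b) < - ln (1 + ts*b) + ts * a^2/(1+ts*b)"
    unfolding ts_def by (rule phi_unique[OF bpos _ ne]) (use g0 in auto)
  then have "loglik y x s2 (g(j := g j)) < loglik y x s2 (g(j := ts))"
    unfolding Lt[OF ts0] Lt[OF g0[rule_format]] by (intro add_strict_left_mono mult_strict_left_mono) simp_all
  moreover have "\<forall>k. (g(j := ts)) k \<ge> 0" using g0 ts0 by simp
  then have "loglik y x s2 (g(j := ts)) \<le> loglik y x s2 g" using gmax by blast
  ultimately show False by simp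
qed


theorem proposition1:
  fixes y :: "real^'n"
    and x :: "'p::finite \<Rightarrow> real^'n"
    and s2 :: real
  assumes cols_nonzero: "\<And>j. x j \<noteq> 0"
    and s2_pos: "s2 > 0"
  shows "\<exists>g::'p \<Rightarrow> real.
           (\<forall>j. g j \<ge> 0)
         \<and> (\<forall>h::'p \<Rightarrow> real. (\<forall>j. h j \<ge> 0) \<longrightarrow> loglik y x s2 h \<le> loglik y x s2 g)
         \<and> (\<forall>j. let Cj = s2 *\<^sub>R mat 1
                           + (\<Sum>k\<in>supp_idx g - {j}. g k *\<^sub>R outer (x k) (x k));
                    a = x j \<bullet> (matrix_inv Cj *v y);
                    b = x j \<bullet> (matrix_inv Cj *v x j)
                in g j = (if a\<^sup>2 > b then (a\<^sup>2 - b) / b\<^sup>2 else 0))"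
proof -
  define B where "B = (s2 *\<^sub>R mat 1 :: real^'n^'n)"
  define R where "R = (\<Sum>j\<in>UNIV. exp (y \<bullet> (matrix_inv B *v y)) / (x j \<bullet> (matrix_inv B *v x j)))"
  have pdmB: "pdm B" using pdm_s2 s2_pos B_def by blast
  have b0pos: "x j \<bullet> (matrix_inv B *v x j) > 0" for j by (rule pdm_quad_inv(1)[OF pdmB cols_nonzero])
  have R0: "R \<ge> 0" unfolding R_def
    by (intro sum_nonneg divide_nonneg_pos) (auto intro: b0pos less_imp_le)
  define K where "K = cbox (0::real^'p) (\<chi> j. R)"
  have memK: "v \<in> K \<longleftrightarrow> (\<forall>j. 0 \<le> v$j \<and> v$j \<le> R)" for v unfolding K_def mem_box_cart by simp
  have KS: "K \<subseteq> {v. \<forall>j. v$j \<ge> 0}" using memK by auto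
  have "continuous_on K (\<lambda>v. loglik y x s2 (\<lambda>j. v$j))"
    using contF[OF s2_pos] KS continuous_on_subset by blast
  moreover have "compact K" unfolding K_def by (rule compact_cbox)
  moreover have K0: "0 \<in> K" using memK R0 by simp
  ultimately obtain v where v: "v \<in> K" "\<forall>u\<in>K. loglik y x s2 (\<lambda>j. u$j) \<le> loglik y x s2 (\<lambda>j. v$j)"
    using continuous_attains_sup[of K "\<lambda>v. loglik y x s2 (\<lambda>j. v$j)"] by blast
  define g where "g = (\<lambda>j. v$j)"
  have g0: "\<forall>j. g j \<ge> 0" using v memK g_def by auto
  have gmax: "\<forall>h::'p \<Rightarrow> real. (\<forall>j. h j \<ge> 0) \<longrightarrow> loglik y x s2 h \<le> loglik y x s2 g"
  proof (intro allI impI)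
    fix h :: "'p \<Rightarrow> real" assume h: "\<forall>j. h j \<ge> 0"
    show "loglik y x s2 h \<le> loglik y x s2 g"
    proof (cases "\<forall>j. h j \<le> R")
      case True
      then have "(\<chi> j. h j) \<in> K" using memK h by simp
      then have "loglik y x s2 (\<lambda>j. (\<chi> j. h j)$j) \<le> loglik y x s2 g" using v(2) g_def by blast
      then show ?thesis by simp
    next
      case False
      then obtain j where hj: "h j > R" by (auto simp: not_le)
      have "loglik y x s2 h < loglik y x s2 (\<lambda>_. 0)"
        using coerc[where y=y and x=x and j=j and h=h, OF s2_pos cols_nonzero h] hj unfolding R_def B_def by blast
      moreover have "loglik y x s2 (\<lambda>j. (0::real^'p)$j) \<le> loglik y x s2 g" using v(2) K0 g_def by blast
      ultimately show ?thesis by simp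
    qed
  qed
  have cj: "\<forall>j. let Cj = s2 *\<^sub>R mat 1
                           + (\<Sum>k\<in>supp_idx g - {j}. g k *\<^sub>R outer (x k) (x k));
                    a = x j \<bullet> (matrix_inv Cj *v y);
                    b = x j \<bullet> (matrix_inv Cj *v x j)
                in g j = (if a\<^sup>2 > b then (a\<^sup>2 - b) / b\<^sup>2 else 0)"
    unfolding Let_def
    by (intro allI coord[where x=x and y=y and g=g, OF s2_pos cols_nonzero g0 gmax])
  show ?thesis using g0 gmax cj by blast
qed

end
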